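(* Let $Q_1,Q_2,f_1,f_2,\mathcal{A},M,d_{Q_1},d_{Q_2},\mu$ be as in the context, fix $T\in\mathbb{N}_0$, and let the sequences $(x_t)_{t=0}^{T+1}$, $(u_t)_{t=0}^{T+1}$, $(z_t)_{t=0}^{T}$, $(\hat x_t)_{t=1}^{T+1}$, $(L_t)_{t=0}^{T}$ be generated by the algorithm described in the context with smoothness parameter $\mu>0$. Set \[ \bar x:=u_T\in Q_1,\qquad \bar y:=\sum_{t=0}^T\frac{2(t+1)}{(T+1)(T+2)}\,y_*(x_t)\in Q_2 . \] Then \[ \overline{\phi}(\bar x)-\underline{\phi}(\bar y)\le\frac{4\big(D_1\|\mathcal{A}\|^2/\mu+D_1M-\chi_T\big)}{(T+1)^2}+\mu D_2, \] where $\chi_T:=\sum_{t=0}^{T-1}(L_{t+1}-L_t)\big(d_{Q_1}(z_{t+1})-\tfrac12\|z_t-\hat x_{t+1}\|_{\mathbb{R}^n}^2\big)$, $D_1:=\max_{x\in Q_1}d_{Q_1}(x)$ and $D_2:=\max_{y\in Q_2}d_{Q_2}(y)$.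
   Context: $\mathbb{R}^n$ and $\mathbb{R}^m$ carry the standard scalar product $\langle\cdot,\cdot\rangle$ and norms $\|\cdot\|_{\mathbb{R}^n}$, $\|\cdot\|_{\mathbb{R}^m}$ (possibly not Euclidean). $Q_1\subset\mathbb{R}^n$, $Q_2\subset\mathbb{R}^m$ are compact convex. $f_1:\mathbb{R}^n\to\mathbb{R}$ and $f_2:\mathbb{R}^m\to\mathbb{R}$ are smooth convex functions, with $\nabla f_1$ Lipschitz continuous with constant $M>0$ (w.r.t. $\|\cdot\|_{\mathbb{R}^n}$ and its dual norm). $\mathcal{A}:\mathbb{R}^n\to\mathbb{R}^m$ is linear, $\|\mathcal{A}\|:=\max\{\langle\mathcal{A}x,y\rangle:\|x\|_{\mathbb{R}^n}=1,\|y\|_{\mathbb{R}^m}=1\}$, and $\mathcal{A}^*$ is its adjoint. Let $\phi(x,y)=f_1(x)+\langle\mathcal{A}x,y\rangle-f_2(y)$, $\overline{\phi}(x)=\max_{y\in Q_2}\phi(x,y)$, $\underline{\phi}(y)=\min_{x\in Q_1}\phi(x,y)$. A distance-generating function for a closed convex set $Q$ (in a normed space) is $d_Q:Q\to\mathbb{R}_{\ge0}$ that is continuous, strongly convex with modulus 1 w.r.t. the norm, and whose subdifferential admits a continuous selection $d_Q'$ on $Q^o=\{x\in Q:\partial d_Q(x)\ne\emptyset\}$; $V_z(x)=d_Q(x)-d_Q(z)-\langle d_Q'(z),x-z\rangle$, $\mathrm{Prox}_{Q,z}(s)=\arg\min_{x\in Q}\{\langle s,x-z\rangle+V_z(x)\}$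 for $z\in Q^o$, and $c(d_Q)=\arg\min_Q d_Q$, with $d_Q(c(d_Q))=0$ assumed. Let $d_{Q_1},d_{Q_2}$ be distance-generating functions for $Q_1,Q_2$. For $\mu>0$ set $\overline{\phi}_\mu(x)=\max_{y\in Q_2}\{f_1(x)+\langle\mathcal{A}x,y\rangle-f_2(y)-\mu d_{Q_2}(y)\}$ and let $y_*(x)$ be the unique maximizer. Then $\overline{\phi}_\mu$ is convex and differentiable with $\nabla\overline{\phi}_\mu(x)=\nabla f_1(x)+\mathcal{A}^*y_*(x)$, Lipschitz with constant $L_\mu:=M+\|\mathcal{A}\|^2/\mu$. Algorithm: set $L_0=L_\mu$, $x_0=c(d_{Q_1})$, $u_0=\arg\min_{x\in Q_1}\{\frac12(\overline{\phi}_\mu(x_0)+\langle\nabla\overline{\phi}_\mu(x_0),x-x_0\rangle)+L_0d_{Q_1}(x)\}$, $z_0=u_0$, $\tau_0=2/3$, $x_1=\tau_0z_0+(1-\tau_0)u_0$, $\hat x_1=\mathrm{Prox}_{Q_1,z_0}(\nabla\overline{\phi}_\mu(x_1)/L_0)$, $u_1=\tau_0\hat x_1+(1-\tau_0)u_0$. For $t=1,\dots,T$: choose $0<L_t\le L_\mu$ with $\overline{\phi}_\mu(u_t)\le\overline{\phi}_\mu(x_t)+\langle\nabla\overline{\phi}_\mu(x_t),u_t-x_t\rangle+\frac{L_t}{2}\|u_t-x_t\|_{\mathbb{R}^n}^2$; set $z_t=\arg\min_{x\in Q_1}\{\sum_{k=0}^t\frac{k+1}{2}(\overline{\phi}_\mu(x_k)+\langle\nabla\overline{\phi}_\mu(x_k),x-x_k\rangle)+L_td_{Q_1}(x)\}$;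 set $\tau_t=\frac{2}{t+3}$, $x_{t+1}=\tau_tz_t+(1-\tau_t)u_t$, $\hat x_{t+1}=\mathrm{Prox}_{Q_1,z_t}(\frac{t+2}{2}\nabla\overline{\phi}_\mu(x_{t+1})/L_t)$, $u_{t+1}=\tau_t\hat x_{t+1}+(1-\tau_t)u_t$. *)

theory Defs
  imports "HOL-Analysis.Analysis"
begin

definition is_norm :: "('a::real_vector \<Rightarrow> real) \<Rightarrow> bool" where
  "is_norm N \<longleftrightarrow> (\<forall>x. 0 \<le> N x) \<and> (\<forall>x. N x = 0 \<longleftrightarrow> x = 0)
     \<and> (\<forall>c x. N (c *\<^sub>R x) = \<bar>c\<bar> * N x) \<and> (\<forall>x y. N (x + y) \<le> N x + N y)"

definition dual_norm :: "('a::real_inner \<Rightarrow> real) \<Rightarrow> 'a \<Rightarrow> real" where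
  "dual_norm N s = Sup {s \<bullet> x | x. N x \<le> 1}"

definition op_norm :: "('a::real_inner \<Rightarrow> real) \<Rightarrow> ('b::real_inner \<Rightarrow> real) \<Rightarrow> ('a \<Rightarrow> 'b) \<Rightarrow> real" where
  "op_norm N1 N2 A = Sup {A x \<bullet> y | x y. N1 x = 1 \<and> N2 y = 1}"

definition strongly_convex_on1 :: "'a::real_vector set \<Rightarrow> ('a \<Rightarrow> real) \<Rightarrow> ('a \<Rightarrow> real) \<Rightarrow> bool" where
  "strongly_convex_on1 Q N d \<longleftrightarrow> (\<forall>x\<in>Q. \<forall>y\<in>Q. \<forall>l::real. 0 \<le> l \<and> l \<le> 1 \<longrightarrow>
     d (l *\<^sub>R x + (1 - l) *\<^sub>R y) \<le> l * d x + (1 - l) * d y - 1/2 * l * (1 - l) * (N (x - y))^2)"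

text \<open>Subgradient of d (a function on Q, extended by +infinity outside Q) at x.\<close>
definition subgrad_on :: "'a::real_inner set \<Rightarrow> ('a \<Rightarrow> real) \<Rightarrow> 'a \<Rightarrow> 'a \<Rightarrow> bool" where
  "subgrad_on Q d x s \<longleftrightarrow> (\<forall>y\<in>Q. d x + s \<bullet> (y - x) \<le> d y)"

definition dom_subdiff :: "'a::real_inner set \<Rightarrow> ('a \<Rightarrow> real) \<Rightarrow> 'a set" where
  "dom_subdiff Q d = {x \<in> Q. \<exists>s. subgrad_on Q d x s}"

text \<open>Distance-generating function d for Q with continuous subgradient selection d',
  including the standing assumption that \<open>d\<close> attains the value 0 on Q (d(c(d)) = 0).\<close>
definition dgf :: "'a::real_inner set \<Rightarrow> ('a \<Rightarrow> real) \<Rightarrow> ('a \<Rightarrow> real) \<Rightarrow> ('a \<Rightarrow> 'a) \<Rightarrow> bool" where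
  "dgf Q N d d' \<longleftrightarrow> (\<forall>x\<in>Q. 0 \<le> d x) \<and> continuous_on Q d \<and> strongly_convex_on1 Q N d
     \<and> (\<forall>x\<in>dom_subdiff Q d. subgrad_on Q d x (d' x)) \<and> continuous_on (dom_subdiff Q d) d'
     \<and> (\<exists>c\<in>Q. d c = 0)"

definition bregman :: "('a::real_inner \<Rightarrow> real) \<Rightarrow> ('a \<Rightarrow> 'a) \<Rightarrow> 'a \<Rightarrow> 'a \<Rightarrow> real" where
  "bregman d d' z x = d x - d z - d' z \<bullet> (x - z)"

definition is_argmin_on :: "'a set \<Rightarrow> ('a \<Rightarrow> real) \<Rightarrow> 'a \<Rightarrow> bool" where
  "is_argmin_on Q F z \<longleftrightarrow> z \<in> Q \<and> (\<forall>v\<in>Q. F z \<le> F v)"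

definition phi :: "('a::real_inner \<Rightarrow> real) \<Rightarrow> ('b::real_inner \<Rightarrow> real) \<Rightarrow> ('a \<Rightarrow> 'b) \<Rightarrow> 'a \<Rightarrow> 'b \<Rightarrow> real" where
  "phi f1 f2 A x y = f1 x + A x \<bullet> y - f2 y"

definition phibar :: "('a::real_inner \<Rightarrow> real) \<Rightarrow> ('b::real_inner \<Rightarrow> real) \<Rightarrow> ('a \<Rightarrow> 'b) \<Rightarrow> 'b set \<Rightarrow> 'a \<Rightarrow> real" where
  "phibar f1 f2 A Q2 x = Sup ((\<lambda>y. phi f1 f2 A x y) ` Q2)"

definition phiunder :: "('a::real_inner \<Rightarrow> real) \<Rightarrow> ('b::real_inner \<Rightarrow> real) \<Rightarrow> ('a \<Rightarrow> 'b) \<Rightarrow> 'a set \<Rightarrow> 'b \<Rightarrow> real" where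
  "phiunder f1 f2 A Q1 y = Inf ((\<lambda>x. phi f1 f2 A x y) ` Q1)"

definition phimu :: "('a::real_inner \<Rightarrow> real) \<Rightarrow> ('b::real_inner \<Rightarrow> real) \<Rightarrow> ('a \<Rightarrow> 'b) \<Rightarrow> ('b \<Rightarrow> real) \<Rightarrow> 'b set \<Rightarrow> real \<Rightarrow> 'a \<Rightarrow> real" where
  "phimu f1 f2 A d2 Q2 \<mu> x = Sup ((\<lambda>y. phi f1 f2 A x y - \<mu> * d2 y) ` Q2)"

end

theory Submission
  imports Defs
begin

lemma isn_h: "is_norm N \<Longrightarrow> N (c *\<^sub>R x) = \<bar>c\<bar> * N x" unfolding is_norm_def by auto
lemma isn_0: "is_norm N \<Longrightarrow> N 0 = 0" using isn_h[of N 0 0] by simp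
lemma isn_nn: "is_norm N \<Longrightarrow> N x \<ge> 0" unfolding is_norm_def by auto
lemma isn_tri: "is_norm N \<Longrightarrow> N (x + y) \<le> N x + N y" unfolding is_norm_def by auto
lemma isn_eq0: "is_norm N \<Longrightarrow> N x = 0 \<longleftrightarrow> x = 0" unfolding is_norm_def by auto
lemma isn_minus: "is_norm N \<Longrightarrow> N (- x) = N x" using isn_h[of N "-1" x] by simp
lemma isn_commute: "is_norm N \<Longrightarrow> N (x - y) = N (y - x)" using isn_minus[of N "x - y"] by simp

lemmas isn = isn_0 isn_nn isn_h isn_tri isn_minus isn_commute isn_eq0

lemma norm_sumN: assumes "is_norm N" and "finite S"
  shows "N (sum f S) \<le> (\<Sum>i\<in>S. N (f i))"
  using assms(2)
proof (induction S rule: finite_induct)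
  case empty then show ?case using isn_0[OF assms(1)] by simp
next
  case (insert a S)
  then show ?case using isn(4)[OF assms(1), of "f a" "sum f S"] by simp
qed

lemma norm_upper: fixes N :: "'a::euclidean_space \<Rightarrow> real" assumes "is_norm N"
  shows "\<exists>C\<ge>0. \<forall>x. N x \<le> C * norm x"
proof (intro exI[of _ "\<Sum>b\<in>Basis. N b"] conjI allI)
  show "0 \<le> (\<Sum>b\<in>Basis. N b)" using isn(2)[OF assms] by (simp add: sum_nonneg)
  fix x :: 'a
  have "N x = N (\<Sum>b\<in>Basis. (x \<bullet> b) *\<^sub>R b)" by (simp add: euclidean_representation)
  also have "\<dots> \<le> (\<Sum>b\<in>Basis. N ((x \<bullet> b) *\<^sub>R b))" by (rule norm_sumN[OF assms]) simp
  also have "\<dots> = (\<Sum>b\<in>Basis. \<bar>x \<bullet> b\<bar> * N b)" using isn(3)[OF assms] by simp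
  also have "\<dots> \<le> (\<Sum>b\<in>Basis. norm x * N b)"
    apply (rule sum_mono) apply (rule mult_right_mono)
    using Basis_le_norm isn(2)[OF assms] by auto
  also have "\<dots> = (\<Sum>b\<in>Basis. N b) * norm x" by (simp add: sum_distrib_left mult.commute)
  finally show "N x \<le> (\<Sum>b\<in>Basis. N b) * norm x" .
qed

lemma norm_cont: fixes N :: "'a::euclidean_space \<Rightarrow> real" assumes "is_norm N"
  shows "continuous_on S N"
proof -
  obtain C where C: "C \<ge> 0" "\<And>x. N x \<le> C * norm x" using norm_upper[OF assms] by blast
  have lip: "\<bar>N x - N y\<bar> \<le> (C+1) * norm (x - y)" for x y
  proof -
    have "N x \<le> N y + N (x - y)" using isn(4)[OF assms, of y "x - y"] by simp
    moreover have "N y \<le> N x + N (y - x)" using isn(4)[OF assms, of x "y - x"] by simp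
    moreover have "N (x - y) \<le> C * norm (x - y)" "N (y - x) = N (x - y)" using C isn(6)[OF assms] by auto
    moreover have "C * norm (x - y) \<le> (C+1) * norm (x - y)" by (simp add: mult_right_mono)
    ultimately show ?thesis by linarith
  qed
  show ?thesis unfolding continuous_on_iff
  proof (intro ballI allI impI)
    fix x e assume "x \<in> S" "(0::real) < e"
    show "\<exists>d>0. \<forall>x'\<in>S. dist x' x < d \<longrightarrow> dist (N x') (N x) < e"
    proof (intro exI[of _ "e / (C+1)"] conjI ballI impI)
      show "0 < e / (C+1)" using \<open>0 < e\<close> C by simp
      fix x' assume "dist x' x < e / (C+1)"
      then have "(C+1) * norm (x' - x) < e" using C by (simp add: dist_norm field_simps)
      then show "dist (N x') (N x) < e" using lip[of x' x] by (simp add: dist_real_def)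
    qed
  qed
qed

lemma norm_lower: fixes N :: "'a::euclidean_space \<Rightarrow> real" assumes "is_norm N"
  shows "\<exists>c>0. \<forall>x. c * norm x \<le> N x"
proof -
  have "compact (sphere (0::'a) 1)" by simp
  moreover have "(SOME i. i \<in> Basis) \<in> sphere (0::'a) 1"
    using SOME_Basis by (simp add: norm_Basis)
  then have "sphere (0::'a) 1 \<noteq> {}" by blast
  ultimately have "\<exists>x\<in>sphere (0::'a) 1. \<forall>y\<in>sphere 0 1. N x \<le> N y"
    by (rule continuous_attains_inf[OF _ _ norm_cont[OF assms]])
  then obtain x0 where x0: "x0 \<in> sphere 0 1" "\<And>y. y \<in> sphere 0 1 \<Longrightarrow> N x0 \<le> N y"
    by blast
  have "N x0 > 0" using x0(1) isn(2,7)[OF assms, of x0] by auto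
  show ?thesis
  proof (intro exI[of _ "N x0"] conjI allI)
    show "0 < N x0" by fact
    fix x :: 'a
    show "N x0 * norm x \<le> N x"
    proof (cases "x = 0")
      case True then show ?thesis using isn(1)[OF assms] by simp
    next
      case False
      then have "(1 / norm x) *\<^sub>R x \<in> sphere 0 1" by simp
      then have "N x0 \<le> N ((1 / norm x) *\<^sub>R x)" by (rule x0(2))
      also have "\<dots> = N x / norm x" using isn(3)[OF assms] by simp
      finally show ?thesis using False by (simp add: field_simps)
    qed
  qed
qed

lemma dual_le: fixes N :: "'a::euclidean_space \<Rightarrow> real" assumes "is_norm N"
  shows "s \<bullet> h \<le> dual_norm N s * N h"
proof -
  obtain c where c: "c > 0" "\<And>x. c * norm x \<le> N x" using norm_lower[OF assms] by blast
  let ?S = "{s \<bullet> x | x. N x \<le> 1}"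
  have bdd: "bdd_above ?S"
  proof (rule bdd_aboveI[of _ "norm s / c"])
    fix r assume "r \<in> ?S"
    then obtain x where x: "r = s \<bullet> x" "N x \<le> 1" by blast
    have "norm x \<le> 1 / c" using c(2)[of x] x(2) c(1) by (simp add: field_simps)
    have "r \<le> norm s * norm x" using x(1) norm_cauchy_schwarz by simp
    also have "\<dots> \<le> norm s * (1 / c)" by (rule mult_left_mono) (use \<open>norm x \<le> 1 / c\<close> in auto)
    finally show "r \<le> norm s / c" by simp
  qed
  show ?thesis
  proof (cases "h = 0")
    case True
    have "\<exists>x. s \<bullet> 0 = s \<bullet> x \<and> N x \<le> 1" using isn(1)[OF assms] by (intro exI[of _ 0]) simp
    then have "s \<bullet> 0 \<in> ?S" by simp
    then have "0 \<in> ?S" by simp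
    then have "0 \<le> dual_norm N s" unfolding dual_norm_def using cSup_upper[OF _ bdd] by blast
    then show ?thesis using True isn(1)[OF assms] by simp
  next
    case False
    then have pos: "N h > 0" using isn(2,7)[OF assms, of h] by auto
    have "N ((1 / N h) *\<^sub>R h) = 1" using isn(3)[OF assms] pos by simp
    then have "s \<bullet> ((1 / N h) *\<^sub>R h) \<in> ?S" by (intro CollectI exI[of _ "(1 / N h) *\<^sub>R h"]) simp
    then have "s \<bullet> ((1 / N h) *\<^sub>R h) \<le> dual_norm N s" unfolding dual_norm_def using cSup_upper[OF _ bdd] by blast
    then show ?thesis using pos by (simp add: field_simps)
  qed
qed

lemma op_le: fixes N1 :: "'a::euclidean_space \<Rightarrow> real" and N2 :: "'b::euclidean_space \<Rightarrow> real"
  assumes "is_norm N1" "is_norm N2" "linear A"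
  shows "A h \<bullet> y \<le> op_norm N1 N2 A * N1 h * N2 y"
proof -
  obtain c1 where c1: "c1 > 0" "\<And>x. c1 * norm x \<le> N1 x" using norm_lower[OF assms(1)] by blast
  obtain c2 where c2: "c2 > 0" "\<And>x. c2 * norm x \<le> N2 x" using norm_lower[OF assms(2)] by blast
  obtain B where Bp: "0 < B" and B1: "\<And>x. norm (A x) \<le> B * norm x"
    using linear_bounded_pos[OF assms(3)] by blast
  have B: "\<And>x. norm (A x) \<le> B * norm x" "B \<ge> 0" using Bp B1 by auto
  let ?S = "{A x \<bullet> y | x y. N1 x = 1 \<and> N2 y = 1}"
  have bdd: "bdd_above ?S"
  proof (rule bdd_aboveI[of _ "B * (1/c1) * (1/c2)"])
    fix r assume "r \<in> ?S"
    then obtain x y where x: "r = A x \<bullet> y" "N1 x = 1" "N2 y = 1" by blast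
    have nx: "norm x \<le> 1 / c1" using c1(2)[of x] x(2) c1(1) by (simp add: field_simps)
    have ny: "norm y \<le> 1 / c2" using c2(2)[of y] x(3) c2(1) by (simp add: field_simps)
    have "r \<le> norm (A x) * norm y" using x(1) norm_cauchy_schwarz by simp
    also have "\<dots> \<le> (B * norm x) * norm y" by (rule mult_right_mono) (use B in auto)
    also have "\<dots> \<le> (B * (1/c1)) * (1/c2)"
      by (rule mult_mono[OF mult_left_mono[OF nx B(2)] ny]) (use B c1 in auto)
    finally show "r \<le> B * (1/c1) * (1/c2)" .
  qed
  show ?thesis
  proof (cases "h = 0 \<or> y = 0")
    case True
    then show ?thesis using isn(1)[OF assms(1)] isn(1)[OF assms(2)] linear_0[OF assms(3)] by auto
  next
    case False
    then have p1: "N1 h > 0" and p2: "N2 y > 0"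
      using isn(2,7)[OF assms(1), of h] isn(2,7)[OF assms(2), of y] by auto
    have "N1 ((1 / N1 h) *\<^sub>R h) = 1" using isn(3)[OF assms(1)] p1 by simp
    moreover have "N2 ((1 / N2 y) *\<^sub>R y) = 1" using isn(3)[OF assms(2)] p2 by simp
    ultimately have "A ((1 / N1 h) *\<^sub>R h) \<bullet> ((1 / N2 y) *\<^sub>R y) \<in> ?S"
      by (intro CollectI exI[of _ "(1 / N1 h) *\<^sub>R h"] exI[of _ "(1 / N2 y) *\<^sub>R y"]) simp
    then have "A ((1 / N1 h) *\<^sub>R h) \<bullet> ((1 / N2 y) *\<^sub>R y) \<le> op_norm N1 N2 A"
      unfolding op_norm_def using cSup_upper[OF _ bdd] by blast
    then have "(A h \<bullet> y) / (N1 h * N2 y) \<le> op_norm N1 N2 A"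
      using linear_cmul[OF assms(3)] by (simp add: field_simps)
    then show ?thesis using p1 p2 by (simp add: field_simps)
  qed
qed


lemma lim01: fixes a b c :: real
  assumes "\<And>l. 0 < l \<Longrightarrow> l \<le> 1 \<Longrightarrow> b - l * c \<le> a" "c \<ge> 0" shows "b \<le> a"
proof (rule ccontr)
  assume "\<not> b \<le> a"
  define l where "l = min 1 ((b - a) / (2 * (c + 1)))"
  have l: "0 < l" "l \<le> 1" using \<open>\<not> b \<le> a\<close> assms(2) by (auto simp: l_def)
  have "l * c \<le> ((b - a) / (2 * (c + 1))) * c"
    by (rule mult_right_mono) (use assms(2) in \<open>auto simp: l_def\<close>)
  also have "\<dots> < b - a"
  proof -
    have "0 < (b - a) * (c + 2)" using \<open>\<not> b \<le> a\<close> assms(2) by (intro mult_pos_pos) auto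
    then show ?thesis using assms(2) by (simp add: field_simps algebra_simps)
  qed
  finally show False using assms(1)[OF l] by linarith
qed

lemma strong_min:
  fixes F G d :: "'a::real_vector \<Rightarrow> real"
  assumes Q: "convex Q" and z: "z \<in> Q" "\<And>w. w \<in> Q \<Longrightarrow> F z \<le> F w"
    and G: "convex_on Q G" and d: "strongly_convex_on1 Q N d" and m: "m \<ge> 0"
    and FG: "\<And>w. w \<in> Q \<Longrightarrow> F w = G w + m * d w" and v: "v \<in> Q"
  shows "F z + m / 2 * (N (v - z))^2 \<le> F v"
proof (rule lim01[where c = "m/2 * (N (v - z))^2"])
  show "0 \<le> m / 2 * (N (v - z))\<^sup>2" using m by simp
  fix l :: real assume l: "0 < l" "l \<le> 1"
  let ?w = "l *\<^sub>R v + (1 - l) *\<^sub>R z"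
  let ?K = "(N (v - z))^2"
  have w: "?w \<in> Q" using Q v z(1) l unfolding convex_def by auto
  have "\<forall>u\<ge>0. \<forall>u'\<ge>0. u + u' = 1 \<longrightarrow> G (u *\<^sub>R v + u' *\<^sub>R z) \<le> u * G v + u' * G z"
    using G v z(1) unfolding convex_on_def by blast
  then have Gw: "G ?w \<le> l * G v + (1 - l) * G z" using l by auto
  have dw: "d ?w \<le> l * d v + (1 - l) * d z - 1/2 * l * (1 - l) * ?K"
    using d v z(1) l unfolding strongly_convex_on1_def by auto
  have "F z \<le> F ?w" by (rule z(2)[OF w])
  also have "\<dots> = G ?w + m * d ?w" by (rule FG[OF w])
  also have "\<dots> \<le> l * G v + (1 - l) * G z + m * (l * d v + (1 - l) * d z - 1/2 * l * (1 - l) * ?K)"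
    using Gw mult_left_mono[OF dw m] by linarith
  also have "\<dots> = l * F v + (1 - l) * F z - m/2 * l * (1 - l) * ?K"
    using FG[OF v] FG[OF z(1)] by (simp add: algebra_simps)
  finally have ineq: "F z \<le> l * F v + (1 - l) * F z - m/2 * l * (1 - l) * ?K" .
  have "l * (F z + m / 2 * ?K - l * (m / 2 * ?K)) \<le> l * F v"
    using ineq by (simp add: algebra_simps diff_divide_distrib add_divide_distrib)
  then show "F z + m / 2 * ?K - l * (m / 2 * ?K) \<le> F v"
    using l by (simp add: mult_le_cancel_left_pos)
qed

lemma convex_on_affine: "convex Q \<Longrightarrow> convex_on Q (\<lambda>v. c \<bullet> v + k)"
  unfolding convex_on_def
proof (intro conjI ballI allI impI)
  fix x y :: 'a and u v :: real assume "convex Q" "u + v = 1"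
  have "u * k + v * k = (u + v) * k" by (simp add: distrib_right)
  then have "k = u * k + v * k" using \<open>u + v = 1\<close> by simp
  then show "c \<bullet> (u *\<^sub>R x + v *\<^sub>R y) + k \<le> u * (c \<bullet> x + k) + v * (c \<bullet> y + k)"
    by (simp add: inner_add_right algebra_simps)
qed

lemma deriv_line:
  assumes "\<And>v. (f has_derivative (\<lambda>k. D v \<bullet> k)) (at v)"
  shows "((\<lambda>t. f (x + t *\<^sub>R h)) has_real_derivative (D (x + t *\<^sub>R h) \<bullet> h)) (at t)"
proof -
  have d1: "((\<lambda>t. x + t *\<^sub>R h) has_derivative (\<lambda>t. t *\<^sub>R h)) (at t)"
    by (auto intro!: derivative_eq_intros)
  have "((\<lambda>t. f (x + t *\<^sub>R h)) has_derivative (\<lambda>s. D (x + t *\<^sub>R h) \<bullet> (s *\<^sub>R h))) (at t)"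
    using has_derivative_compose[OF d1 assms[of "x + t *\<^sub>R h"]] .
  moreover have "(\<lambda>s. D (x + t *\<^sub>R h) \<bullet> (s *\<^sub>R h)) = (*) (D (x + t *\<^sub>R h) \<bullet> h)"
    by (auto simp: fun_eq_iff)
  ultimately show ?thesis unfolding has_field_derivative_def by simp
qed

lemma conv_tangent:
  fixes f :: "'a::euclidean_space \<Rightarrow> real"
  assumes cvx: "convex_on UNIV f" and der: "\<And>v. (f has_derivative (\<lambda>k. D v \<bullet> k)) (at v)"
  shows "f w + D w \<bullet> (v - w) \<le> f v"
proof -
  let ?h = "v - w"
  let ?p = "\<lambda>t::real. f (w + t *\<^sub>R ?h)"
  have cp: "convex_on UNIV ?p"
    unfolding convex_on_def
  proof (intro conjI ballI allI impI)
    show "convex (UNIV :: real set)" by simp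
    fix x y u v :: real assume "u \<ge> 0" "v \<ge> 0" "u + v = 1"
    moreover have "w + (u *\<^sub>R x + v *\<^sub>R y) *\<^sub>R ?h = u *\<^sub>R (w + x *\<^sub>R ?h) + v *\<^sub>R (w + y *\<^sub>R ?h)"
    proof -
      have "u *\<^sub>R (w + x *\<^sub>R ?h) + v *\<^sub>R (w + y *\<^sub>R ?h) = (u + v) *\<^sub>R w + (u * x + v * y) *\<^sub>R ?h"
        by (simp add: algebra_simps)
      then show ?thesis using \<open>u + v = 1\<close> by simp
    qed
    ultimately show "?p (u *\<^sub>R x + v *\<^sub>R y) \<le> u * ?p x + v * ?p y"
      using cvx unfolding convex_on_def by simp
  qed
  have "(?p has_field_derivative (D (w + 0 *\<^sub>R ?h) \<bullet> ?h)) (at 0 within UNIV)"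
    using deriv_line[OF der] by blast
  then have "?p 1 - ?p 0 \<ge> (D w \<bullet> ?h) * (1 - 0)"
    by (intro convex_on_imp_above_tangent[OF cp]) auto
  then show ?thesis by simp
qed

lemma descent:
  fixes f :: "'a::euclidean_space \<Rightarrow> real"
  assumes N: "is_norm N" and der: "\<And>v. (f has_derivative (\<lambda>k. D v \<bullet> k)) (at v)"
    and lip: "\<And>v w. dual_norm N (D v - D w) \<le> M * N (v - w)"
  shows "f u \<le> f x + D x \<bullet> (u - x) + M / 2 * (N (u - x))^2"
proof -
  let ?h = "u - x"
  let ?K = "(N ?h)^2"
  define p where "p = (\<lambda>t. f (x + t *\<^sub>R ?h) - t * (D x \<bullet> ?h) - M / 2 * t^2 * ?K)"
  have dp: "(p has_real_derivative (D (x + t *\<^sub>R ?h) \<bullet> ?h - D x \<bullet> ?h - M * t * ?K)) (at t)" for t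
    unfolding p_def
    by (rule derivative_eq_intros deriv_line[OF der] | simp)+
  have "p 1 \<le> p 0"
  proof (rule DERIV_nonpos_imp_nonincreasing[of 0 1 p])
    fix t :: real assume t: "0 \<le> t" "t \<le> 1"
    have "(D (x + t *\<^sub>R ?h) - D x) \<bullet> ?h \<le> dual_norm N (D (x + t *\<^sub>R ?h) - D x) * N ?h"
      by (rule dual_le[OF N])
    also have "\<dots> \<le> (M * N (t *\<^sub>R ?h)) * N ?h"
      by (rule mult_right_mono) (use lip[of "x + t *\<^sub>R ?h" x] isn_nn[OF N] in auto)
    also have "\<dots> = M * t * ?K" using isn_h[OF N] t by (simp add: power2_eq_square)
    finally have "D (x + t *\<^sub>R ?h) \<bullet> ?h - D x \<bullet> ?h - M * t * ?K \<le> 0" by (simp add: inner_diff_left)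
    then show "\<exists>y. DERIV p t :> y \<and> y \<le> 0" using dp by blast
  qed simp
  then show ?thesis unfolding p_def by simp
qed


lemma phimu_max:
  assumes "is_argmin_on Q2 (\<lambda>y. - (phi f1 f2 A v y - \<mu> * d2 y)) ys"
  shows "phimu f1 f2 A d2 Q2 \<mu> v = phi f1 f2 A v ys - \<mu> * d2 ys"
    and "y \<in> Q2 \<Longrightarrow> phi f1 f2 A v y - \<mu> * d2 y \<le> phimu f1 f2 A d2 Q2 \<mu> v"
proof -
  have ys: "ys \<in> Q2" "\<And>y. y \<in> Q2 \<Longrightarrow> phi f1 f2 A v y - \<mu> * d2 y \<le> phi f1 f2 A v ys - \<mu> * d2 ys"
    using assms unfolding is_argmin_on_def by auto
  show eq: "phimu f1 f2 A d2 Q2 \<mu> v = phi f1 f2 A v ys - \<mu> * d2 ys"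
    unfolding phimu_def by (rule cSup_eq_maximum) (use ys in auto)
  show "y \<in> Q2 \<Longrightarrow> phi f1 f2 A v y - \<mu> * d2 y \<le> phimu f1 f2 A d2 Q2 \<mu> v"
    using ys(2) eq by simp
qed

lemma grad_ineq:
  fixes f1 :: "'a::euclidean_space \<Rightarrow> real" and A :: "'a \<Rightarrow> 'b::euclidean_space"
  assumes ys: "\<And>v. is_argmin_on Q2 (\<lambda>y. - (phi f1 f2 A v y - \<mu> * d2 y)) (ystar v)"
    and cvx: "convex_on UNIV f1" and der: "\<And>v. (f1 has_derivative (\<lambda>k. Df1 v \<bullet> k)) (at v)"
    and lin: "linear A"
  shows "phimu f1 f2 A d2 Q2 \<mu> w + (Df1 w + adjoint A (ystar w)) \<bullet> (v - w) \<le> phimu f1 f2 A d2 Q2 \<mu> v"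
proof -
  let ?y = "ystar w"
  have yQ: "?y \<in> Q2" using ys[of w] unfolding is_argmin_on_def by auto
  have t: "f1 w + Df1 w \<bullet> (v - w) \<le> f1 v" by (rule conv_tangent[OF cvx der])
  have adj: "(v - w) \<bullet> adjoint A ?y = A v \<bullet> ?y - A w \<bullet> ?y"
    using adjoint_works[OF lin] linear_diff[OF lin] by (simp add: inner_diff_left)
  have gw0: "(Df1 w + adjoint A ?y) \<bullet> (v - w) = Df1 w \<bullet> (v - w) + adjoint A ?y \<bullet> (v - w)"
    by (simp add: inner_add_left)
  have gw1: "adjoint A ?y \<bullet> (v - w) = (v - w) \<bullet> adjoint A ?y" by (rule inner_commute)
  have gw: "(Df1 w + adjoint A ?y) \<bullet> (v - w) = Df1 w \<bullet> (v - w) + (A v \<bullet> ?y - A w \<bullet> ?y)"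
    using gw0 gw1 adj by simp
  have "phimu f1 f2 A d2 Q2 \<mu> w + (Df1 w + adjoint A ?y) \<bullet> (v - w)
      = f1 w + A w \<bullet> ?y - f2 ?y - \<mu> * d2 ?y + Df1 w \<bullet> (v - w) + (A v \<bullet> ?y - A w \<bullet> ?y)"
    using phimu_max(1)[OF ys[of w]] gw by (simp add: phi_def)
  also have "\<dots> \<le> phi f1 f2 A v ?y - \<mu> * d2 ?y" using t by (simp add: phi_def)
  also have "\<dots> \<le> phimu f1 f2 A d2 Q2 \<mu> v" by (rule phimu_max(2)[OF ys[of v] yQ])
  finally show ?thesis .
qed

lemma phimu_upper:
  fixes f1 :: "'a::euclidean_space \<Rightarrow> real" and A :: "'a \<Rightarrow> 'b::euclidean_space"
  assumes N1: "is_norm N1" and N2: "is_norm N2"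
    and ys: "\<And>v. is_argmin_on Q2 (\<lambda>y. - (phi f1 f2 A v y - \<mu> * d2 y)) (ystar v)"
    and der: "\<And>v. (f1 has_derivative (\<lambda>k. Df1 v \<bullet> k)) (at v)"
    and lip: "\<And>v w. dual_norm N1 (Df1 v - Df1 w) \<le> M * N1 (v - w)"
    and f2: "convex_on UNIV f2" and lin: "linear A"
    and d2: "strongly_convex_on1 Q2 N2 d2" and Q2: "convex Q2" and mu: "\<mu> > 0"
  shows "phimu f1 f2 A d2 Q2 \<mu> u \<le> phimu f1 f2 A d2 Q2 \<mu> x + (Df1 x + adjoint A (ystar x)) \<bullet> (u - x)
           + (M + (op_norm N1 N2 A)^2 / \<mu>) / 2 * (N1 (u - x))^2"
proof -
  let ?yx = "ystar x" and ?yu = "ystar u"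
  let ?F = "\<lambda>y. - (phi f1 f2 A x y - \<mu> * d2 y)"
  let ?G = "\<lambda>y. f2 y + ((- A x) \<bullet> y + (- f1 x))"
  have yx: "?yx \<in> Q2" "\<And>w. w \<in> Q2 \<Longrightarrow> ?F ?yx \<le> ?F w" using ys[of x] unfolding is_argmin_on_def by auto
  have yu: "?yu \<in> Q2" using ys[of u] unfolding is_argmin_on_def by auto
  have G: "convex_on Q2 ?G"
    by (intro convex_on_add convex_on_subset[OF f2] convex_on_affine Q2) auto
  have sm: "?F ?yx + \<mu> / 2 * (N2 (?yu - ?yx))^2 \<le> ?F ?yu"
    by (rule strong_min[where F = ?F and G = ?G and m = \<mu> and d = d2 and N = N2 and Q = Q2, OF Q2 yx G d2 _ _ yu]) (use mu in \<open>auto simp: phi_def\<close>)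
  let ?s = "N1 (u - x)" and ?r = "N2 (?yu - ?yx)" and ?op = "op_norm N1 N2 A"
  have desc: "f1 u \<le> f1 x + Df1 x \<bullet> (u - x) + M / 2 * ?s^2" by (rule descent[OF N1 der lip])
  have opb: "A (u - x) \<bullet> (?yu - ?yx) \<le> ?op * ?s * ?r" by (rule op_le[OF N1 N2 lin])
  have adj: "(u - x) \<bullet> adjoint A ?yx = A u \<bullet> ?yx - A x \<bullet> ?yx"
    using adjoint_works[OF lin] linear_diff[OF lin] by (simp add: inner_diff_left)
  have Auxy: "A (u - x) \<bullet> (?yu - ?yx) = A u \<bullet> ?yu - A x \<bullet> ?yu - (A u \<bullet> ?yx - A x \<bullet> ?yx)"
    using linear_diff[OF lin] by (simp add: inner_diff_left inner_diff_right)
  have quad: "?op * ?s * ?r - \<mu> / 2 * ?r^2 \<le> ?op^2 / \<mu> / 2 * ?s^2"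
  proof -
    have h1: "0 \<le> (?op * ?s - \<mu> * ?r)^2" by simp
    have h2: "(?op * ?s - \<mu> * ?r)^2 = ?op^2 * ?s^2 - 2 * \<mu> * (?op * ?s * ?r) + \<mu>^2 * ?r^2"
      by (simp add: power2_eq_square algebra_simps)
    have h3: "2 * \<mu> * (?op * ?s * ?r - \<mu> / 2 * ?r^2) = 2 * \<mu> * (?op * ?s * ?r) - \<mu>^2 * ?r^2"
      by (simp add: power2_eq_square algebra_simps)
    have h4: "2 * \<mu> * (?op^2 / \<mu> / 2 * ?s^2) = ?op^2 * ?s^2" using mu by simp
    have "2 * \<mu> * (?op * ?s * ?r - \<mu> / 2 * ?r^2) \<le> 2 * \<mu> * (?op^2 / \<mu> / 2 * ?s^2)"
      using h1 h2 h3 h4 by linarith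
    then show ?thesis by (rule mult_left_le_imp_le) (use mu in simp)
  qed
  have pu: "phimu f1 f2 A d2 Q2 \<mu> u = f1 u + A u \<bullet> ?yu - f2 ?yu - \<mu> * d2 ?yu"
    using phimu_max(1)[OF ys[of u]] by (simp add: phi_def)
  have px: "phimu f1 f2 A d2 Q2 \<mu> x = f1 x + A x \<bullet> ?yx - f2 ?yx - \<mu> * d2 ?yx"
    using phimu_max(1)[OF ys[of x]] by (simp add: phi_def)
  have sm': "f1 x + A x \<bullet> ?yu - f2 ?yu - \<mu> * d2 ?yu + \<mu> / 2 * ?r^2 \<le> f1 x + A x \<bullet> ?yx - f2 ?yx - \<mu> * d2 ?yx"
    using sm by (simp add: phi_def)
  have gw0: "(Df1 x + adjoint A ?yx) \<bullet> (u - x) = Df1 x \<bullet> (u - x) + adjoint A ?yx \<bullet> (u - x)"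
    by (simp add: inner_add_left)
  have gw1: "adjoint A ?yx \<bullet> (u - x) = (u - x) \<bullet> adjoint A ?yx" by (rule inner_commute)
  have "(Df1 x + adjoint A ?yx) \<bullet> (u - x) = Df1 x \<bullet> (u - x) + (A u \<bullet> ?yx - A x \<bullet> ?yx)"
    using gw0 gw1 adj by simp
  moreover have "(M + ?op^2 / \<mu>) / 2 * ?s^2 = M / 2 * ?s^2 + ?op^2 / \<mu> / 2 * ?s^2"
    by (simp add: algebra_simps add_divide_distrib)
  ultimately show ?thesis using pu px sm' desc opb Auxy quad by (simp only:)
qed

lemma dom_dense:
  fixes d :: "'a::euclidean_space \<Rightarrow> real"
  assumes Q: "compact Q" "convex Q" and dc: "continuous_on Q d" and sc: "strongly_convex_on1 Q N d"
    and p: "p \<in> Q" and del: "\<delta> > 0"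
  shows "\<exists>w\<in>dom_subdiff Q d. norm (w - p) < \<delta>"
proof -
  have "bounded (d ` Q)" by (rule compact_imp_bounded[OF compact_continuous_image[OF dc Q(1)]])
  then obtain B where B: "\<And>w. w \<in> Q \<Longrightarrow> \<bar>d w\<bar> \<le> B" unfolding bounded_iff by auto
  define B' where "B' = \<bar>B\<bar> + 1"
  have B': "B' > 0" "\<And>w. w \<in> Q \<Longrightarrow> \<bar>d w\<bar> \<le> B'"
  proof -
    show "B' > 0" by (simp add: B'_def)
    fix w assume "w \<in> Q"
    then have "\<bar>d w\<bar> \<le> B" by (rule B)
    moreover have "B \<le> \<bar>B\<bar>" by simp
    ultimately show "\<bar>d w\<bar> \<le> B'" by (simp add: B'_def)
  qed
  define K where "K = 8 * B' / \<delta>^2"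
  have K: "K > 0" using B' del by (simp add: K_def)
  define F where "F = (\<lambda>w. d w + K / 2 * (norm (w - p))^2)"
  have "continuous_on Q F" unfolding F_def by (intro continuous_intros dc)
  then obtain w where w: "w \<in> Q" "\<And>y. y \<in> Q \<Longrightarrow> F w \<le> F y"
    using continuous_attains_inf[OF Q(1)] p by blast
  have "K / 2 * (norm (w - p))^2 \<le> d p - d w" using w(2)[OF p] by (simp add: F_def)
  also have "\<dots> \<le> 2 * B'" using B'(2)[OF p] B'(2)[OF w(1)] by linarith
  finally have "(norm (w - p))^2 \<le> 4 * B' / K" using K by (simp add: field_simps)
  also have "\<dots> = \<delta>^2 / 2" using B' del by (simp add: K_def field_simps)
  also have "\<dots> < \<delta>^2" using del by simp
  finally have close: "norm (w - p) < \<delta>"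
    by (rule power_less_imp_less_base) (use del in simp)
  have sub: "subgrad_on Q d w (- K *\<^sub>R (w - p))"
    unfolding subgrad_on_def
  proof
    fix v assume v: "v \<in> Q"
    show "d w + (- K *\<^sub>R (w - p)) \<bullet> (v - w) \<le> d v"
    proof (rule lim01[where c = "K / 2 * (norm (v - w))^2"])
      show "0 \<le> K / 2 * (norm (v - w))^2" using K by simp
      fix l :: real assume l: "0 < l" "l \<le> 1"
      let ?q = "l *\<^sub>R v + (1 - l) *\<^sub>R w"
      have q: "?q \<in> Q" using Q(2) v w(1) l unfolding convex_def by auto
      have dq: "d ?q \<le> l * d v + (1 - l) * d w - 1/2 * l * (1 - l) * (N (v - w))^2"
        using sc v w(1) l unfolding strongly_convex_on1_def by auto
      have "0 \<le> 1/2 * l * (1 - l) * (N (v - w))^2" using l by simp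
      then have dq': "d ?q \<le> l * d v + (1 - l) * d w" using dq by linarith
      have qp: "?q - p = (w - p) + l *\<^sub>R (v - w)" by (simp add: algebra_simps)
      have nq: "(norm (?q - p))^2 = (norm (w - p))^2 + 2 * l * ((w - p) \<bullet> (v - w)) + l^2 * (norm (v - w))^2"
        unfolding qp power2_norm_eq_inner by (simp add: inner_add_left inner_add_right inner_commute power2_eq_square algebra_simps)
      let ?a = "(w - p) \<bullet> (v - w)" and ?b = "(norm (v - w))^2" and ?n0 = "(norm (w - p))^2"
      have e1: "F w = d w + K/2 * ?n0" by (simp add: F_def)
      have e2: "F ?q = d ?q + K/2 * ?n0 + K/2 * (2 * l * ?a + l^2 * ?b)"
        unfolding F_def nq by (simp only: distrib_left add.assoc)
      have e3: "K/2 * (2 * l * ?a + l^2 * ?b) = l * (K * ?a) + l * (l * (K / 2 * ?b))"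
        by (simp add: algebra_simps power2_eq_square)
      have e4: "l * (d w - K * ?a - l * (K / 2 * ?b)) = l * d w - l * (K * ?a) - l * (l * (K / 2 * ?b))"
        by (simp add: algebra_simps)
      have e5: "(1 - l) * d w = d w - l * d w" by (simp add: algebra_simps)
      have "F w \<le> F ?q" by (rule w(2)[OF q])
      then have "l * (d w - K * ((w - p) \<bullet> (v - w)) - l * (K / 2 * (norm (v - w))^2)) \<le> l * d v"
        using e1 e2 e3 e4 e5 dq' by linarith
      then have "d w - K * ((w - p) \<bullet> (v - w)) - l * (K / 2 * (norm (v - w))^2) \<le> d v"
        using l by (simp add: mult_le_cancel_left_pos)
      then show "d w + (- K *\<^sub>R (w - p)) \<bullet> (v - w) - l * (K / 2 * (norm (v - w))^2) \<le> d v"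
        by simp
    qed
  qed
  have "w \<in> dom_subdiff Q d" unfolding dom_subdiff_def using w(1) sub by blast
  then show ?thesis using close by blast
qed


lemma opt_dprime:
  fixes d :: "'a::euclidean_space \<Rightarrow> real"
  assumes dg: "dgf Q N d d'" and Q: "compact Q" "convex Q" and z: "z \<in> Q"
    and L: "L > 0" and opt: "\<And>v. v \<in> Q \<Longrightarrow> c \<bullet> z + L * d z \<le> c \<bullet> v + L * d v"
    and v: "v \<in> Q"
  shows "0 \<le> (c + L *\<^sub>R d' z) \<bullet> (v - z)"
proof -
  have dc: "continuous_on Q d" and sc: "strongly_convex_on1 Q N d"
    and sg: "\<And>y. y \<in> dom_subdiff Q d \<Longrightarrow> subgrad_on Q d y (d' y)"
    and dcont: "continuous_on (dom_subdiff Q d) d'"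
    using dg unfolding dgf_def by auto
  have zdom: "z \<in> dom_subdiff Q d"
  proof -
    have "subgrad_on Q d z (- (1 / L) *\<^sub>R c)"
      unfolding subgrad_on_def
    proof
      fix y assume y: "y \<in> Q"
      have "L * (d z + (- (1 / L) *\<^sub>R c) \<bullet> (y - z)) = L * d z - c \<bullet> (y - z)"
        using L by (simp add: algebra_simps)
      also have "\<dots> \<le> L * d y" using opt[OF y] by (simp add: inner_diff_right)
      finally show "d z + (- (1 / L) *\<^sub>R c) \<bullet> (y - z) \<le> d y"
        using L by (simp add: mult_le_cancel_left_pos)
    qed
    then show ?thesis unfolding dom_subdiff_def using z by blast
  qed
  have key: "0 \<le> (c + L *\<^sub>R d' y) \<bullet> (y - z)" if y: "y \<in> dom_subdiff Q d" for y
  proof -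
    have yQ: "y \<in> Q" using y unfolding dom_subdiff_def by auto
    have "d y + d' y \<bullet> (z - y) \<le> d z" using sg[OF y] z unfolding subgrad_on_def by auto
    moreover have "c \<bullet> z + L * d z \<le> c \<bullet> y + L * d y" by (rule opt[OF yQ])
    ultimately have "0 \<le> c \<bullet> (y - z) + L * (d' y \<bullet> (y - z))"
    proof -
      assume a: "d y + d' y \<bullet> (z - y) \<le> d z" and b: "c \<bullet> z + L * d z \<le> c \<bullet> y + L * d y"
      have "d' y \<bullet> (z - y) = - (d' y \<bullet> (y - z))" by (simp add: inner_diff_right)
      then have "L * (d z - d y) \<ge> L * (- (d' y \<bullet> (y - z)))" using a L by (intro mult_left_mono) auto
      then show ?thesis using b by (simp add: inner_diff_right algebra_simps)
    qed
    then show ?thesis by (simp add: inner_add_left)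
  qed
  let ?h = "v - z"
  let ?a = "c + L *\<^sub>R d' z"
  show ?thesis
  proof (rule ccontr)
    assume "\<not> 0 \<le> ?a \<bullet> ?h"
    define G where "G = ?a \<bullet> ?h"
    have G: "G < 0" using \<open>\<not> 0 \<le> ?a \<bullet> ?h\<close> by (simp add: G_def)
    define C where "C = norm ?a"
    have C: "C \<ge> 0" by (simp add: C_def)
    define \<rho> where "\<rho> = min 1 (- G / (4 * (C + 1)))"
    have \<rho>: "0 < \<rho>" "\<rho> \<le> 1" "(C + 1) * \<rho> \<le> - G / 4"
    proof -
      have "0 < - G / (4 * (C + 1))" using G C by (intro divide_pos_pos) auto
      then show "0 < \<rho>" "\<rho> \<le> 1" by (auto simp: \<rho>_def)
      have "(C + 1) * \<rho> \<le> (C + 1) * (- G / (4 * (C + 1)))"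
        by (rule mult_left_mono) (use C in \<open>auto simp: \<rho>_def\<close>)
      also have "\<dots> = - G / 4"
      proof -
        have "C + 1 \<noteq> 0" using C by simp
        then show ?thesis by (simp add: field_simps)
      qed
      finally show "(C + 1) * \<rho> \<le> - G / 4" .
    qed
    define nh where "nh = norm ?h"
    have nh: "nh \<ge> 0" by (simp add: nh_def)
    define \<eta> where "\<eta> = (- G / 4) / (L * (nh + 1))"
    have \<eta>: "\<eta> > 0" "L * \<eta> * (nh + 1) = - G / 4"
    proof -
      have pos: "0 < L * (nh + 1)" using L nh by simp
      then show "\<eta> > 0" using G unfolding \<eta>_def by (intro divide_pos_pos) auto
      have "L * \<eta> * (nh + 1) = (L * (nh + 1)) * \<eta>" by (simp add: algebra_simps)
      also have "\<dots> = - G / 4" using pos unfolding \<eta>_def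
        by (metis less_irrefl nonzero_mult_div_cancel_left times_divide_eq_right)
      finally show "L * \<eta> * (nh + 1) = - G / 4" .
    qed
    have "\<forall>e>0. \<exists>dd>0. \<forall>y\<in>dom_subdiff Q d. dist y z < dd \<longrightarrow> dist (d' y) (d' z) < e"
      using dcont zdom unfolding continuous_on_iff by blast
    then obtain \<delta> where \<delta>: "\<delta> > 0" "\<And>y. y \<in> dom_subdiff Q d \<Longrightarrow> dist y z < \<delta> \<Longrightarrow> dist (d' y) (d' z) < \<eta>"
      using \<eta>(1) by blast
    define \<epsilon> where "\<epsilon> = min 1 ((\<delta> / 2) / (nh + 1))"
    have \<epsilon>: "0 < \<epsilon>" "\<epsilon> \<le> 1" "\<epsilon> * (nh + 1) < \<delta>"
    proof -
      show "0 < \<epsilon>" "\<epsilon> \<le> 1" using \<delta> nh by (auto simp: \<epsilon>_def)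
      have pos: "0 < nh + 1" using nh by simp
      have "(nh + 1) * \<epsilon> \<le> (nh + 1) * ((\<delta> / 2) / (nh + 1))"
        by (rule mult_left_mono) (use nh in \<open>auto simp: \<epsilon>_def\<close>)
      also have "\<dots> = \<delta> / 2" using pos
        by (metis less_irrefl nonzero_mult_div_cancel_left times_divide_eq_right)
      also have "\<dots> < \<delta>" using \<delta> by simp
      finally show "\<epsilon> * (nh + 1) < \<delta>" by (simp add: mult.commute)
    qed
    define p where "p = z + \<epsilon> *\<^sub>R ?h"
    have p: "p \<in> Q"
    proof -
      have "p = \<epsilon> *\<^sub>R v + (1 - \<epsilon>) *\<^sub>R z" by (simp add: p_def algebra_simps)
      then show ?thesis using Q(2) v z \<epsilon> unfolding convex_def by auto
    qed
    obtain y where y: "y \<in> dom_subdiff Q d" "norm (y - p) < \<epsilon> * \<rho>"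
      using dom_dense[OF Q dc sc p mult_pos_pos[OF \<epsilon>(1) \<rho>(1)]] by blast
    define r where "r = y - p"
    have yz: "y - z = \<epsilon> *\<^sub>R ?h + r" by (simp add: r_def p_def)
    have nr: "norm r \<le> \<epsilon> * \<rho>" using y(2) by (simp add: r_def)
    have nyz: "norm (y - z) \<le> \<epsilon> * (nh + \<rho>)"
    proof -
      have "norm (y - z) \<le> norm (\<epsilon> *\<^sub>R ?h) + norm r" unfolding yz by (rule norm_triangle_ineq)
      also have "norm (\<epsilon> *\<^sub>R ?h) = \<epsilon> * nh" using \<epsilon> by (simp add: nh_def)
      finally show ?thesis using nr by (simp add: algebra_simps)
    qed
    have "\<epsilon> * (nh + \<rho>) \<le> \<epsilon> * (nh + 1)" using \<epsilon> \<rho> by (intro mult_left_mono) auto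
    then have "dist y z < \<delta>" using nyz \<epsilon>(3) by (simp add: dist_norm)
    then have dd: "norm (d' y - d' z) < \<eta>" using \<delta>(2)[OF y(1)] by (simp add: dist_norm)
    have t1: "?a \<bullet> (y - z) \<le> \<epsilon> * G + C * (\<epsilon> * \<rho>)"
    proof -
      have "?a \<bullet> (y - z) = \<epsilon> * G + ?a \<bullet> r" unfolding yz by (simp add: inner_add_right G_def)
      moreover have "?a \<bullet> r \<le> C * norm r" unfolding C_def by (rule norm_cauchy_schwarz)
      moreover have "C * norm r \<le> C * (\<epsilon> * \<rho>)" using nr C by (rule mult_left_mono)
      ultimately show ?thesis by linarith
    qed
    have t2: "(L *\<^sub>R (d' y - d' z)) \<bullet> (y - z) \<le> L * \<eta> * (\<epsilon> * (nh + \<rho>))"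
    proof -
      have "(L *\<^sub>R (d' y - d' z)) \<bullet> (y - z) = L * ((d' y - d' z) \<bullet> (y - z))" by simp
      also have "\<dots> \<le> L * (norm (d' y - d' z) * norm (y - z))"
        using L by (intro mult_left_mono norm_cauchy_schwarz) auto
      also have "\<dots> \<le> L * (\<eta> * (\<epsilon> * (nh + \<rho>)))"
        using L by (intro mult_left_mono[OF mult_mono[OF less_imp_le[OF dd] nyz]]) (use \<eta>(1) in auto)
      finally show ?thesis by (simp add: mult.assoc)
    qed
    have sum: "(c + L *\<^sub>R d' y) \<bullet> (y - z) = ?a \<bullet> (y - z) + (L *\<^sub>R (d' y - d' z)) \<bullet> (y - z)"
      by (simp add: algebra_simps inner_add_left inner_diff_left)
    have "L * \<eta> * (\<epsilon> * (nh + \<rho>)) \<le> L * \<eta> * (\<epsilon> * (nh + 1))"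
      using L \<eta> \<epsilon> \<rho> by (intro mult_left_mono) auto
    also have "\<dots> = \<epsilon> * (L * \<eta> * (nh + 1))" by (simp add: algebra_simps)
    also have "\<dots> = \<epsilon> * (- G / 4)" using \<eta>(2) by simp
    finally have t2': "L * \<eta> * (\<epsilon> * (nh + \<rho>)) \<le> \<epsilon> * (- G / 4)" .
    have "C * (\<epsilon> * \<rho>) \<le> \<epsilon> * ((C + 1) * \<rho>)" using \<epsilon> \<rho> by (simp add: algebra_simps)
    also have "\<dots> \<le> \<epsilon> * (- G / 4)" using \<epsilon> \<rho> by (intro mult_left_mono) auto
    finally have t1': "C * (\<epsilon> * \<rho>) \<le> \<epsilon> * (- G / 4)" .
    have "0 \<le> \<epsilon> * G + \<epsilon> * (- G / 4) + \<epsilon> * (- G / 4)"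
      using key[OF y(1)] sum t1 t2 t1' t2' by linarith
    also have "\<dots> = \<epsilon> * (G / 2)" by (simp add: algebra_simps)
    also have "\<dots> < 0" using \<epsilon> G by (simp add: mult_pos_neg)
    finally show False by simp
  qed
qed


lemma lin_le_phi:
  fixes f1 :: "'a::euclidean_space \<Rightarrow> real" and A :: "'a \<Rightarrow> 'b::euclidean_space"
  assumes ys: "\<And>v. is_argmin_on Q2 (\<lambda>y. - (phi f1 f2 A v y - \<mu> * d2 y)) (ystar v)"
    and cvx: "convex_on UNIV f1" and der: "\<And>v. (f1 has_derivative (\<lambda>k. Df1 v \<bullet> k)) (at v)"
    and lin: "linear A"
  shows "phimu f1 f2 A d2 Q2 \<mu> w + (Df1 w + adjoint A (ystar w)) \<bullet> (v - w) \<le> phi f1 f2 A v (ystar w) - \<mu> * d2 (ystar w)"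
proof -
  let ?y = "ystar w"
  have t: "f1 w + Df1 w \<bullet> (v - w) \<le> f1 v" by (rule conv_tangent[OF cvx der])
  have adj: "(v - w) \<bullet> adjoint A ?y = A v \<bullet> ?y - A w \<bullet> ?y"
    using adjoint_works[OF lin] linear_diff[OF lin] by (simp add: inner_diff_left)
  have gw0: "(Df1 w + adjoint A ?y) \<bullet> (v - w) = Df1 w \<bullet> (v - w) + adjoint A ?y \<bullet> (v - w)"
    by (simp add: inner_add_left)
  have gw1: "adjoint A ?y \<bullet> (v - w) = (v - w) \<bullet> adjoint A ?y" by (rule inner_commute)
  have gw: "(Df1 w + adjoint A ?y) \<bullet> (v - w) = Df1 w \<bullet> (v - w) + (A v \<bullet> ?y - A w \<bullet> ?y)"
    using gw0 gw1 adj by simp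
  have "phimu f1 f2 A d2 Q2 \<mu> w + (Df1 w + adjoint A ?y) \<bullet> (v - w)
      = f1 w + A w \<bullet> ?y - f2 ?y - \<mu> * d2 ?y + Df1 w \<bullet> (v - w) + (A v \<bullet> ?y - A w \<bullet> ?y)"
    using phimu_max(1)[OF ys[of w]] gw by (simp add: phi_def)
  also have "\<dots> \<le> phi f1 f2 A v ?y - \<mu> * d2 ?y" using t by (simp add: phi_def)
  finally show ?thesis .
qed

lemma min_in_dom:
  assumes L: "L > (0::real)" and z: "z \<in> Q" and opt: "\<And>v. v \<in> Q \<Longrightarrow> c \<bullet> z + L * d z \<le> c \<bullet> v + L * d v"
  shows "z \<in> dom_subdiff Q d"
proof -
  have "subgrad_on Q d z (- (1 / L) *\<^sub>R c)"
    unfolding subgrad_on_def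
  proof
    fix y assume y: "y \<in> Q"
    have "L * (d z + (- (1 / L) *\<^sub>R c) \<bullet> (y - z)) = L * d z - c \<bullet> (y - z)"
      using L by (simp add: algebra_simps)
    also have "\<dots> \<le> L * d y" using opt[OF y] by (simp add: inner_diff_right)
    finally show "d z + (- (1 / L) *\<^sub>R c) \<bullet> (y - z) \<le> d y"
      using L by (simp add: mult_le_cancel_left_pos)
  qed
  then show ?thesis unfolding dom_subdiff_def using z by blast
qed

lemma gauss_half: "(\<Sum>k\<le>t. (real k + 1) / 2) = (real t + 1) * (real t + 2) / 4"
  by (induction t) (simp_all add: field_simps)

lemma base_arith: fixes P X Lm n d L0 :: real
  assumes "P \<le> X + Lm / 2 * n" "1/2 * n \<le> d" "L0 = Lm" "0 < Lm" "0 \<le> n"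
  shows "1/2 * P \<le> 1/2 * X + L0 * d"
proof -
  have "1/2 * P \<le> 1/2 * (X + Lm / 2 * n)" using assms(1) by simp
  also have "\<dots> = 1/2 * X + (Lm * n) / 4" by (simp add: algebra_simps)
  also have "\<dots> \<le> 1/2 * X + (Lm * n) / 2" using assms by simp
  also have "(Lm * n) / 2 = Lm * (1/2 * n)" by simp
  also have "Lm * (1/2 * n) \<le> Lm * d" using assms by (intro mult_left_mono) auto
  finally show ?thesis using assms(3) by simp
qed

lemma comb_eq: fixes Ac P X Y tau :: real
  shows "Ac * (P + (tau * X + (1 - tau) * Y)) = (Ac * tau) * (P + X) + (Ac * (1 - tau)) * (P + Y)"
  by (simp add: algebra_simps)

theorem theorem4:
  fixes Q1 :: "'a::euclidean_space set" and Q2 :: "'b::euclidean_space set"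
    and N1 :: "'a \<Rightarrow> real" and N2 :: "'b \<Rightarrow> real"
    and f1 :: "'a \<Rightarrow> real" and Df1 :: "'a \<Rightarrow> 'a" and f2 :: "'b \<Rightarrow> real"
    and A :: "'a \<Rightarrow> 'b" and M \<mu> :: real
    and d1 :: "'a \<Rightarrow> real" and d1' :: "'a \<Rightarrow> 'a" and d2 :: "'b \<Rightarrow> real" and d2' :: "'b \<Rightarrow> 'b"
    and ystar :: "'a \<Rightarrow> 'b" and T :: nat
    and x u z xh :: "nat \<Rightarrow> 'a" and L :: "nat \<Rightarrow> real"
  assumes N1: "is_norm N1" and N2: "is_norm N2"
    and Q1: "compact Q1" "convex Q1" and Q2: "compact Q2" "convex Q2"
    and f1_cvx: "convex_on UNIV f1"
    and f1_grad: "\<And>v. (f1 has_derivative (\<lambda>h. Df1 v \<bullet> h)) (at v)"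
    and f1_lip: "\<And>v w. dual_norm N1 (Df1 v - Df1 w) \<le> M * N1 (v - w)"
    and M_pos: "M > 0"
    and f2_cvx: "convex_on UNIV f2"
    and f2_diff: "\<And>y. f2 differentiable (at y)"
    and A_lin: "linear A"
    and d1: "dgf Q1 N1 d1 d1'" and d2: "dgf Q2 N2 d2 d2'"
    and mu_pos: "\<mu> > 0"
    and ystar: "\<And>v. is_argmin_on Q2 (\<lambda>y. - (phi f1 f2 A v y - \<mu> * d2 y)) (ystar v)"
  defines "g \<equiv> \<lambda>v. Df1 v + adjoint A (ystar v)"
    and "Lmu \<equiv> M + (op_norm N1 N2 A)^2 / \<mu>"
  assumes L0: "L 0 = Lmu"
    and x0: "is_argmin_on Q1 d1 (x 0)"
    and u0: "is_argmin_on Q1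
       (\<lambda>v. 1/2 * (phimu f1 f2 A d2 Q2 \<mu> (x 0) + g (x 0) \<bullet> (v - x 0)) + L 0 * d1 v) (u 0)"
    and z0: "z 0 = u 0"
    and x_step: "\<And>t. t \<le> T \<Longrightarrow>
       x (Suc t) = (2 / (real t + 3)) *\<^sub>R z t + (1 - 2 / (real t + 3)) *\<^sub>R u t"
    and xh_step: "\<And>t. t \<le> T \<Longrightarrow> is_argmin_on Q1
       (\<lambda>v. (((real t + 2) / 2 / L t) *\<^sub>R g (x (Suc t))) \<bullet> (v - z t) + bregman d1 d1' (z t) v)
       (xh (Suc t))"
    and u_step: "\<And>t. t \<le> T \<Longrightarrow>
       u (Suc t) = (2 / (real t + 3)) *\<^sub>R xh (Suc t) + (1 - 2 / (real t + 3)) *\<^sub>R u t"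
    and L_step: "\<And>t. 1 \<le> t \<Longrightarrow> t \<le> T \<Longrightarrow> 0 < L t \<and> L t \<le> Lmu \<and>
       phimu f1 f2 A d2 Q2 \<mu> (u t) \<le> phimu f1 f2 A d2 Q2 \<mu> (x t) + g (x t) \<bullet> (u t - x t)
         + L t / 2 * (N1 (u t - x t))^2"
    and z_step: "\<And>t. 1 \<le> t \<Longrightarrow> t \<le> T \<Longrightarrow> is_argmin_on Q1
       (\<lambda>v. (\<Sum>k\<le>t. (real k + 1) / 2 * (phimu f1 f2 A d2 Q2 \<mu> (x k) + g (x k) \<bullet> (v - x k)))
          + L t * d1 v) (z t)"
  shows "phibar f1 f2 A Q2 (u T)
           - phiunder f1 f2 A Q1 (\<Sum>t\<le>T. (2 * (real t + 1) / ((real T + 1) * (real T + 2))) *\<^sub>R ystar (x t))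
         \<le> 4 * (Sup (d1 ` Q1) * (op_norm N1 N2 A)^2 / \<mu> + Sup (d1 ` Q1) * M
                 - (\<Sum>t<T. (L (Suc t) - L t) * (d1 (z (Suc t)) - 1/2 * (N1 (z t - xh (Suc t)))^2)))
             / (real T + 1)^2
           + \<mu> * Sup (d2 ` Q2)"
proof -
  let ?P = "phimu f1 f2 A d2 Q2 \<mu>"
  have d1nn: "\<And>v. v \<in> Q1 \<Longrightarrow> 0 \<le> d1 v" and d1c: "continuous_on Q1 d1"
    and d1s: "strongly_convex_on1 Q1 N1 d1" and d1z: "\<exists>c\<in>Q1. d1 c = 0"
    using d1 unfolding dgf_def by auto
  have d2nn: "\<And>v. v \<in> Q2 \<Longrightarrow> 0 \<le> d2 v" and d2c: "continuous_on Q2 d2"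
    and d2s: "strongly_convex_on1 Q2 N2 d2"
    using d2 unfolding dgf_def by auto
  have gi: "\<And>v w. ?P w + g w \<bullet> (v - w) \<le> ?P v"
    unfolding g_def by (rule grad_ineq[OF ystar f1_cvx f1_grad A_lin])
  have lp: "\<And>v w. ?P w + g w \<bullet> (v - w) \<le> phi f1 f2 A v (ystar w) - \<mu> * d2 (ystar w)"
    unfolding g_def by (rule lin_le_phi[OF ystar f1_cvx f1_grad A_lin])
  have up: "\<And>u v. ?P u \<le> ?P v + g v \<bullet> (u - v) + Lmu / 2 * (N1 (u - v))^2"
    unfolding g_def Lmu_def
    by (rule phimu_upper[OF N1 N2 ystar f1_grad f1_lip f2_cvx A_lin d2s Q2(2) mu_pos])
  have Lmu_pos: "Lmu > 0" unfolding Lmu_def using M_pos mu_pos by (simp add: add_pos_nonneg)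
  have Lpos: "0 < L t \<and> L t \<le> Lmu" if "t \<le> T" for t
  proof (cases "t = 0")
    case True then show ?thesis using L0 Lmu_pos by simp
  next
    case False then show ?thesis using L_step[of t] that by simp
  qed
  define Psi where "Psi = (\<lambda>t v. (\<Sum>k\<le>t. (real k + 1) / 2 * (?P (x k) + g (x k) \<bullet> (v - x k))) + L t * d1 v)"
  define chi where "chi = (\<lambda>t. \<Sum>k<t. (L (Suc k) - L k) * (d1 (z (Suc k)) - 1/2 * (N1 (z k - xh (Suc k)))^2))"
  define Aco where "Aco = (\<lambda>t::nat. (real t + 1) * (real t + 2) / 4)"
  define cc where "cc = (\<lambda>t. \<Sum>k\<le>t. ((real k + 1) / 2) *\<^sub>R g (x k))"
  define ee where "ee = (\<lambda>t. \<Sum>k\<le>t. (real k + 1) / 2 * (?P (x k) - g (x k) \<bullet> x k))"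
  have Psi_aff: "Psi t v = cc t \<bullet> v + ee t + L t * d1 v" for t v
  proof -
    have "cc t \<bullet> v + ee t = (\<Sum>k\<le>t. (real k + 1) / 2 * (g (x k) \<bullet> v) + (real k + 1) / 2 * (?P (x k) - g (x k) \<bullet> x k))"
      unfolding cc_def ee_def by (simp add: inner_sum_left sum.distrib)
    also have "\<dots> = (\<Sum>k\<le>t. (real k + 1) / 2 * (?P (x k) + g (x k) \<bullet> (v - x k)))"
      by (rule sum.cong) (simp_all add: inner_diff_right algebra_simps)
    finally show ?thesis unfolding Psi_def by simp
  qed
  have zmin: "is_argmin_on Q1 (Psi t) (z t)" if "t \<le> T" for t
  proof (cases "t = 0")
    case True
    then show ?thesis using u0 z0 unfolding Psi_def by simp
  next
    case False
    then show ?thesis using z_step[of t] that unfolding Psi_def by simp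
  qed
  have zQ: "z t \<in> Q1" if "t \<le> T" for t using zmin[OF that] unfolding is_argmin_on_def by auto
  have xhQ: "xh (Suc t) \<in> Q1" if "t \<le> T" for t using xh_step[OF that] unfolding is_argmin_on_def by auto
  have u0Q: "u 0 \<in> Q1" using u0 unfolding is_argmin_on_def by auto
  have tau: "0 \<le> 2 / (real t + 3)" "2 / (real t + 3) \<le> (1::real)" for t by auto
  have uQ: "t \<le> T \<Longrightarrow> u t \<in> Q1" for t
  proof (induction t)
    case 0 then show ?case using u0Q by simp
  next
    case (Suc t)
    then have "t \<le> T" by simp
    then show ?case using u_step[of t] Suc xhQ[of t] Q1(2) tau[of t]
      unfolding convex_def by auto
  qed
  have zopt: "0 \<le> (cc t + L t *\<^sub>R d1' (z t)) \<bullet> (v - z t)" if t: "t \<le> T" and v: "v \<in> Q1" for t v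
  proof (rule opt_dprime[OF d1 Q1 zQ[OF t]])
    show "0 < L t" using Lpos[OF t] by simp
    show "v \<in> Q1" by fact
    fix w assume "w \<in> Q1"
    then have "Psi t (z t) \<le> Psi t w" using zmin[OF t] unfolding is_argmin_on_def by auto
    then show "cc t \<bullet> z t + L t * d1 (z t) \<le> cc t \<bullet> w + L t * d1 w" unfolding Psi_aff by simp
  qed
  have zdom: "z t \<in> dom_subdiff Q1 d1" if t: "t \<le> T" for t
  proof (rule min_in_dom[OF _ zQ[OF t]])
    show "0 < L t" using Lpos[OF t] by simp
    fix w assume "w \<in> Q1"
    then have "Psi t (z t) \<le> Psi t w" using zmin[OF t] unfolding is_argmin_on_def by auto
    then show "cc t \<bullet> z t + L t * d1 (z t) \<le> cc t \<bullet> w + L t * d1 w" unfolding Psi_aff by simp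
  qed
  have x0Q: "x 0 \<in> Q1" and x0m: "\<And>w. w \<in> Q1 \<Longrightarrow> d1 (x 0) \<le> d1 w" using x0 unfolding is_argmin_on_def by auto
  have dx0: "d1 (x 0) = 0" using d1z x0m d1nn[OF x0Q] by force
  have inv: "t \<le> T \<Longrightarrow> Aco t * ?P (u t) \<le> Psi t (z t) - chi t" for t
  proof (induction t)
    case 0
    have sm: "d1 (x 0) + 1 / 2 * (N1 (u 0 - x 0))^2 \<le> d1 (u 0)"
      by (rule strong_min[where F = d1 and G = "\<lambda>_. 0" and m = 1 and d = d1 and N = N1 and Q = Q1,
            OF Q1(2) x0Q x0m _ d1s _ _ u0Q]) (simp_all add: convex_on_const Q1(2))
    let ?n = "(N1 (u 0 - x 0))^2"
    have u1: "?P (u 0) \<le> ?P (x 0) + g (x 0) \<bullet> (u 0 - x 0) + Lmu / 2 * ?n" by (rule up)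
    have half: "1/2 * ?n \<le> d1 (u 0)" using sm dx0 by simp
    have "1/2 * ?P (u 0) \<le> 1/2 * (?P (x 0) + g (x 0) \<bullet> (u 0 - x 0)) + L 0 * d1 (u 0)"
      by (rule base_arith[OF u1 half L0 Lmu_pos]) simp
    moreover have "Psi 0 (z 0) = 1/2 * (?P (x 0) + g (x 0) \<bullet> (u 0 - x 0)) + L 0 * d1 (u 0)"
      unfolding Psi_def using z0 by simp
    moreover have "Aco 0 * ?P (u 0) = 1/2 * ?P (u 0)" "chi 0 = 0" by (simp_all add: Aco_def chi_def)
    ultimately show ?case by linarith
  next
    case (Suc t)
    then have tT: "t \<le> T" and sT: "Suc t \<le> T" by auto
    have IH: "Aco t * ?P (u t) \<le> Psi t (z t) - chi t" using Suc.IH tT by simp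
    define \<tau> where "\<tau> = 2 / (real t + 3)"
    define as where "as = (real t + 2) / 2"
    let ?s = "Suc t"
    let ?zt = "z t" and ?zs = "z (Suc t)" and ?xh = "xh (Suc t)" and ?xs = "x (Suc t)"
    let ?gs = "g ?xs" and ?Lt = "L t" and ?Ls = "L (Suc t)"
    let ?Nd = "(N1 (?xh - ?zt))^2"
    have \<tau>: "0 \<le> \<tau>" "\<tau> \<le> 1" using tau[of t] by (auto simp: \<tau>_def)
    have xs: "?xs = \<tau> *\<^sub>R ?zt + (1 - \<tau>) *\<^sub>R u t" using x_step[OF tT] by (simp add: \<tau>_def)
    have us: "u ?s = \<tau> *\<^sub>R ?xh + (1 - \<tau>) *\<^sub>R u t" using u_step[OF tT] by (simp add: \<tau>_def)
    have dlt: "u ?s - ?xs = \<tau> *\<^sub>R (?xh - ?zt)" unfolding xs us by (simp add: algebra_simps)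
    have Nus: "(N1 (u ?s - ?xs))^2 = \<tau>^2 * ?Nd" using dlt isn_h[OF N1] \<tau> by (simp add: power_mult_distrib)
    have Lst: "?P (u ?s) \<le> ?P ?xs + ?gs \<bullet> (u ?s - ?xs) + ?Ls / 2 * (N1 (u ?s - ?xs))^2"
      using L_step[of ?s] sT by simp
    have split: "u ?s - ?xs = \<tau> *\<^sub>R (?xh - ?xs) + (1 - \<tau>) *\<^sub>R (u t - ?xs)"
      using us by (simp add: algebra_simps)
    have aff: "?gs \<bullet> (u ?s - ?xs) = \<tau> * (?gs \<bullet> (?xh - ?xs)) + (1 - \<tau>) * (?gs \<bullet> (u t - ?xs))"
      unfolding split by (simp add: inner_add_right)
    have A1: "Aco ?s * \<tau> = as" by (simp add: Aco_def \<tau>_def as_def field_simps)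
    have A2: "Aco ?s * (1 - \<tau>) = Aco t" by (simp add: Aco_def \<tau>_def field_simps)
    have A3: "Aco ?s * \<tau>^2 \<le> 1"
    proof -
      have "Aco ?s * \<tau>^2 = (Aco ?s * \<tau>) * \<tau>" by (simp add: power2_eq_square)
      also have "\<dots> = as * \<tau>" using A1 by simp
      also have "\<dots> \<le> 1" by (simp add: as_def \<tau>_def field_simps)
      finally show ?thesis .
    qed
    have A0: "0 \<le> Aco t" "0 \<le> Aco ?s" by (auto simp: Aco_def)
    have Lsnn: "0 \<le> ?Ls" "0 < ?Lt" using Lpos[OF sT] Lpos[OF tT] by auto
    let ?lxh = "?P ?xs + ?gs \<bullet> (?xh - ?xs)" and ?lut = "?P ?xs + ?gs \<bullet> (u t - ?xs)"
    have E1: "Aco ?s * (?P ?xs + ?gs \<bullet> (u ?s - ?xs)) = as * ?lxh + Aco t * ?lut"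
      unfolding aff comb_eq A1 A2 ..
    have E2: "Aco ?s * (?Ls / 2 * (N1 (u ?s - ?xs))^2) \<le> ?Ls / 2 * ?Nd"
    proof -
      have "Aco ?s * (?Ls / 2 * (N1 (u ?s - ?xs))^2) = (Aco ?s * \<tau>^2) * (?Ls / 2 * ?Nd)"
        unfolding Nus by (simp add: algebra_simps)
      also have "\<dots> \<le> ?Ls / 2 * ?Nd"
        by (rule mult_left_le_one_le) (use A3 A0 Lsnn \<tau> in auto)
      finally show ?thesis .
    qed
    have E3: "Aco t * ?lut \<le> Aco t * ?P (u t)" using gi[of ?xs "u t"] A0 by (intro mult_left_mono) auto
    have stepA: "Aco ?s * ?P (u ?s) \<le> as * ?lxh + Aco t * ?P (u t) + ?Ls / 2 * ?Nd"
    proof -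
      have "Aco ?s * ?P (u ?s) \<le> Aco ?s * (?P ?xs + ?gs \<bullet> (u ?s - ?xs) + ?Ls / 2 * (N1 (u ?s - ?xs))^2)"
        using Lst A0 by (intro mult_left_mono) auto
      also have "\<dots> = Aco ?s * (?P ?xs + ?gs \<bullet> (u ?s - ?xs)) + Aco ?s * (?Ls / 2 * (N1 (u ?s - ?xs))^2)"
        by (simp add: distrib_left)
      finally show ?thesis using E1 E2 E3 by linarith
    qed
    let ?V = "bregman d1 d1' ?zt"
    have zsQ: "?zs \<in> Q1" using zQ[OF sT] .
    have ztQ: "?zt \<in> Q1" using zQ[OF tT] .
    have sgz: "subgrad_on Q1 d1 ?zt (d1' ?zt)" using d1 zdom[OF tT] unfolding dgf_def by auto
    have Vnn: "\<And>w. w \<in> Q1 \<Longrightarrow> ?V ?zt \<le> ?V w"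
      using sgz unfolding subgrad_on_def bregman_def by (auto simp: algebra_simps)
    have K1: "?V ?zt + 1 / 2 * (N1 (?xh - ?zt))^2 \<le> ?V ?xh"
      by (rule strong_min[where F = ?V and G = "\<lambda>v. (- d1' ?zt) \<bullet> v + (d1' ?zt \<bullet> ?zt - d1 ?zt)" and m = 1
          and d = d1 and N = N1 and Q = Q1, OF Q1(2) ztQ Vnn convex_on_affine[OF Q1(2)] d1s _ _ xhQ[OF tT]])
        (simp_all add: bregman_def inner_diff_right algebra_simps)
    have V0: "?V ?zt = 0" by (simp add: bregman_def)
    have K1': "?Lt / 2 * ?Nd \<le> ?Lt * ?V ?xh"
    proof -
      have "?Lt * (1/2 * ?Nd) \<le> ?Lt * ?V ?xh" using K1 V0 Lsnn by (intro mult_left_mono) auto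
      then show ?thesis by simp
    qed
    have K2: "(((real t + 2) / 2 / ?Lt) *\<^sub>R ?gs) \<bullet> (?xh - ?zt) + ?V ?xh \<le> (((real t + 2) / 2 / ?Lt) *\<^sub>R ?gs) \<bullet> (?zs - ?zt) + ?V ?zs"
      using xh_step[OF tT] zsQ unfolding is_argmin_on_def by blast
    have K2': "as * (?gs \<bullet> (?xh - ?zt)) + ?Lt * ?V ?xh \<le> as * (?gs \<bullet> (?zs - ?zt)) + ?Lt * ?V ?zs"
    proof -
      have "?Lt * ((((real t + 2) / 2 / ?Lt) *\<^sub>R ?gs) \<bullet> (?xh - ?zt) + ?V ?xh)
          \<le> ?Lt * ((((real t + 2) / 2 / ?Lt) *\<^sub>R ?gs) \<bullet> (?zs - ?zt) + ?V ?zs)"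
        using K2 Lsnn by (intro mult_left_mono) auto
      then show ?thesis using Lsnn by (simp add: as_def distrib_left)
    qed
    have K3: "Psi t ?zt + ?Lt * ?V ?zs \<le> Psi t ?zs"
    proof -
      have o: "0 \<le> (cc t + ?Lt *\<^sub>R d1' ?zt) \<bullet> (?zs - ?zt)" by (rule zopt[OF tT zsQ])
      have "(cc t + ?Lt *\<^sub>R d1' ?zt) \<bullet> (?zs - ?zt) = cc t \<bullet> ?zs - cc t \<bullet> ?zt + ?Lt * (d1' ?zt \<bullet> (?zs - ?zt))"
        by (simp add: inner_add_left inner_diff_right right_diff_distrib)
      moreover have "?Lt * ?V ?zs = ?Lt * d1 ?zs - ?Lt * d1 ?zt - ?Lt * (d1' ?zt \<bullet> (?zs - ?zt))"
        unfolding bregman_def by (simp only: right_diff_distrib)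
      ultimately show ?thesis using o unfolding Psi_aff by linarith
    qed
    have rs: "(real (Suc t) + 1) / 2 = as" by (simp add: as_def)
    have Psis: "Psi ?s ?zs = Psi t ?zs + as * (?P ?xs + ?gs \<bullet> (?zs - ?xs)) + (?Ls - ?Lt) * d1 ?zs"
      unfolding Psi_def sum.atMost_Suc rs by (simp add: left_diff_distrib)
    have chis: "chi ?s = chi t + (?Ls - ?Lt) * (d1 ?zs - 1/2 * ?Nd)"
      unfolding chi_def using isn_commute[OF N1, of ?zt ?xh] by simp
    have e1: "as * ?lxh = as * ?P ?xs + as * (?gs \<bullet> (?xh - ?zt)) + as * (?gs \<bullet> (?zt - ?xs))"
      by (simp add: inner_diff_right algebra_simps)
    have e2: "as * (?P ?xs + ?gs \<bullet> (?zs - ?xs)) = as * ?P ?xs + as * (?gs \<bullet> (?zs - ?zt)) + as * (?gs \<bullet> (?zt - ?xs))"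
      by (simp add: inner_diff_right algebra_simps)
    have e3: "?Ls / 2 * ?Nd = ?Lt / 2 * ?Nd + (?Ls - ?Lt) * (1/2 * ?Nd)" by (simp add: field_simps)
    have e4: "(?Ls - ?Lt) * (d1 ?zs - 1/2 * ?Nd) = (?Ls - ?Lt) * d1 ?zs - (?Ls - ?Lt) * (1/2 * ?Nd)"
      by (simp add: algebra_simps)
    show ?case using stepA IH K1' K2' K3 Psis chis e1 e2 e3 e4 by linarith
  qed
  define ybar where "ybar = (\<Sum>t\<le>T. (2 * (real t + 1) / ((real T + 1) * (real T + 2))) *\<^sub>R ystar (x t))"
  define D1 where "D1 = Sup (d1 ` Q1)"
  define D2 where "D2 = Sup (d2 ` Q2)"
  have bd1: "bdd_above (d1 ` Q1)"
    by (rule bounded_imp_bdd_above[OF compact_imp_bounded[OF compact_continuous_image[OF d1c Q1(1)]]])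
  have bd2: "bdd_above (d2 ` Q2)"
    by (rule bounded_imp_bdd_above[OF compact_imp_bounded[OF compact_continuous_image[OF d2c Q2(1)]]])
  have D1: "\<And>v. v \<in> Q1 \<Longrightarrow> d1 v \<le> D1" unfolding D1_def using bd1 by (auto intro: cSup_upper)
  have D2: "\<And>v. v \<in> Q2 \<Longrightarrow> d2 v \<le> D2" unfolding D2_def using bd2 by (auto intro: cSup_upper)
  have Q1ne: "Q1 \<noteq> {}" using d1z by auto
  have Q2ne: "Q2 \<noteq> {}" using ystar[of "x 0"] unfolding is_argmin_on_def by auto
  have AT: "Aco T > 0" by (simp add: Aco_def)
  have sumA: "(\<Sum>k\<le>T. (real k + 1) / 2) = Aco T" unfolding Aco_def by (rule gauss_half)
  have lam: "2 * (real k + 1) / ((real T + 1) * (real T + 2)) = ((real k + 1) / 2) / Aco T" for k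
    unfolding Aco_def by (simp only: divide_divide_eq_right)
  have sumlam: "(\<Sum>k\<le>T. 2 * (real k + 1) / ((real T + 1) * (real T + 2))) = 1"
  proof -
    have "(\<Sum>k\<le>T. 2 * (real k + 1) / ((real T + 1) * (real T + 2))) = (\<Sum>k\<le>T. ((real k + 1) / 2) / Aco T)"
      by (simp only: lam)
    also have "\<dots> = (\<Sum>k\<le>T. (real k + 1) / 2) / Aco T" by (rule sum_divide_distrib[symmetric])
    also have "\<dots> = Aco T / Aco T" by (simp only: sumA)
    also have "\<dots> = 1" using AT by simp
    finally show ?thesis .
  qed
  have Aybar: "Aco T *\<^sub>R ybar = (\<Sum>k\<le>T. ((real k + 1) / 2) *\<^sub>R ystar (x k))"
    unfolding ybar_def scaleR_sum_right lam using AT by (simp add: scaleR_scaleR)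
  have f2ybar: "f2 ybar \<le> (\<Sum>k\<le>T. 2 * (real k + 1) / ((real T + 1) * (real T + 2)) * f2 (ystar (x k)))"
    unfolding ybar_def by (rule convex_on_sum[OF _ _ f2_cvx sumlam]) auto
  have Af2: "Aco T * f2 ybar \<le> (\<Sum>k\<le>T. (real k + 1) / 2 * f2 (ystar (x k)))"
  proof -
    have "Aco T * f2 ybar \<le> Aco T * (\<Sum>k\<le>T. 2 * (real k + 1) / ((real T + 1) * (real T + 2)) * f2 (ystar (x k)))"
      using f2ybar AT by (intro mult_left_mono) auto
    also have "\<dots> = (\<Sum>k\<le>T. Aco T * ((real k + 1) / 2 / Aco T * f2 (ystar (x k))))"
      by (simp only: lam sum_distrib_left)
    also have "\<dots> = (\<Sum>k\<le>T. (real k + 1) / 2 * f2 (ystar (x k)))"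
      by (rule sum.cong) (use AT in simp_all)
    finally show ?thesis .
  qed
  have PsiT: "Psi T v \<le> Aco T * phi f1 f2 A v ybar + L T * d1 v" if v: "v \<in> Q1" for v
  proof -
    have "(\<Sum>k\<le>T. (real k + 1) / 2 * (?P (x k) + g (x k) \<bullet> (v - x k)))
        \<le> (\<Sum>k\<le>T. (real k + 1) / 2 * phi f1 f2 A v (ystar (x k)))"
    proof (rule sum_mono)
      fix k assume "k \<in> {..T}"
      have yk: "ystar (x k) \<in> Q2" using ystar[of "x k"] unfolding is_argmin_on_def by auto
      have "?P (x k) + g (x k) \<bullet> (v - x k) \<le> phi f1 f2 A v (ystar (x k))"
      proof -
        have "0 \<le> \<mu> * d2 (ystar (x k))" using d2nn[OF yk] mu_pos by simp
        then show ?thesis using lp[of "x k" v] by linarith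
      qed
      then show "(real k + 1) / 2 * (?P (x k) + g (x k) \<bullet> (v - x k)) \<le> (real k + 1) / 2 * phi f1 f2 A v (ystar (x k))"
        by (intro mult_left_mono) auto
    qed
    also have "\<dots> = (\<Sum>k\<le>T. (real k + 1) / 2 * f1 v + A v \<bullet> (((real k + 1) / 2) *\<^sub>R ystar (x k)) - (real k + 1) / 2 * f2 (ystar (x k)))"
      unfolding phi_def by (rule sum.cong) (simp_all add: right_diff_distrib distrib_left)
    also have "\<dots> = Aco T * f1 v + A v \<bullet> (\<Sum>k\<le>T. ((real k + 1) / 2) *\<^sub>R ystar (x k)) - (\<Sum>k\<le>T. (real k + 1) / 2 * f2 (ystar (x k)))"
      unfolding sum_subtractf sum.distrib sum_distrib_right[symmetric] sumA inner_sum_right ..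
    also have "\<dots> \<le> Aco T * phi f1 f2 A v ybar"
      unfolding Aybar[symmetric] phi_def using Af2 by (simp add: algebra_simps)
    finally show ?thesis unfolding Psi_def by simp
  qed
  have invT: "Aco T * ?P (u T) \<le> Psi T (z T) - chi T" by (rule inv) simp
  have uTQ: "u T \<in> Q1" by (rule uQ) simp
  have LT: "0 < L T" "L T \<le> Lmu" using Lpos[of T] by auto
  have d1le: "L T * d1 v \<le> Lmu * D1" if "v \<in> Q1" for v
    by (rule mult_mono[OF LT(2) D1[OF that]]) (use Lmu_pos d1nn[OF that] in auto)
  define R where "R = Lmu * D1 - chi T"
  have Rnn: "0 \<le> R"
  proof -
    have "Psi T (z T) \<le> Psi T (u T)" using zmin[of T] uTQ unfolding is_argmin_on_def by auto
    also have "\<dots> \<le> Aco T * ?P (u T) + L T * d1 (u T)"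
    proof -
      have "(\<Sum>k\<le>T. (real k + 1) / 2 * (?P (x k) + g (x k) \<bullet> (u T - x k))) \<le> (\<Sum>k\<le>T. (real k + 1) / 2 * ?P (u T))"
        using gi by (intro sum_mono mult_left_mono) auto
      also have "\<dots> = Aco T * ?P (u T)" unfolding sum_distrib_right[symmetric] sumA ..
      finally show ?thesis unfolding Psi_def by simp
    qed
    finally show ?thesis using invT d1le[OF uTQ] unfolding R_def by linarith
  qed
  have low: "?P (u T) - R / Aco T \<le> phiunder f1 f2 A Q1 ybar"
    unfolding phiunder_def
  proof (rule cInf_greatest)
    show "(\<lambda>v. phi f1 f2 A v ybar) ` Q1 \<noteq> {}" using Q1ne by simp
    fix r assume "r \<in> (\<lambda>v. phi f1 f2 A v ybar) ` Q1"
    then obtain v where v: "v \<in> Q1" "r = phi f1 f2 A v ybar" by auto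
    have "Psi T (z T) \<le> Psi T v" using zmin[of T] v unfolding is_argmin_on_def by auto
    then have "Aco T * ?P (u T) \<le> Aco T * phi f1 f2 A v ybar + R"
      using invT PsiT[OF v(1)] d1le[OF v(1)] unfolding R_def by linarith
    then have "Aco T * ?P (u T) \<le> Aco T * r + R" using v(2) by simp
    then have "Aco T * (?P (u T) - R / Aco T) \<le> Aco T * r" using AT by (simp add: algebra_simps)
    then show "?P (u T) - R / Aco T \<le> r" using AT by (simp add: mult_le_cancel_left_pos)
  qed
  have high: "phibar f1 f2 A Q2 (u T) \<le> ?P (u T) + \<mu> * D2"
    unfolding phibar_def
  proof (rule cSup_least)
    show "(\<lambda>y. phi f1 f2 A (u T) y) ` Q2 \<noteq> {}" using Q2ne by simp
    fix r assume "r \<in> (\<lambda>y. phi f1 f2 A (u T) y) ` Q2"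
    then obtain y where y: "y \<in> Q2" "r = phi f1 f2 A (u T) y" by auto
    have "phi f1 f2 A (u T) y - \<mu> * d2 y \<le> ?P (u T)" by (rule phimu_max(2)[OF ystar y(1)])
    moreover have "\<mu> * d2 y \<le> \<mu> * D2" using D2[OF y(1)] mu_pos by simp
    ultimately show "r \<le> ?P (u T) + \<mu> * D2" using y(2) by linarith
  qed
  have RA: "R / Aco T \<le> 4 * R / (real T + 1)^2"
  proof -
    have "R / Aco T = 4 * R / ((real T + 1) * (real T + 2))" by (simp add: Aco_def)
    also have "\<dots> \<le> 4 * R / ((real T + 1) * (real T + 1))"
      using Rnn by (intro divide_left_mono mult_left_mono) auto
    finally show ?thesis by (simp add: power2_eq_square)
  qed
  have Req: "R = D1 * (op_norm N1 N2 A)^2 / \<mu> + D1 * M - chi T"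
    unfolding R_def Lmu_def by (simp add: algebra_simps)
  have "phibar f1 f2 A Q2 (u T) - phiunder f1 f2 A Q1 ybar \<le> 4 * R / (real T + 1)^2 + \<mu> * D2"
    using low high RA by linarith
  then show ?thesis unfolding Req ybar_def D1_def D2_def chi_def by simp
qed

end
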